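(* Let $\ell_1,\ell_2\in\mathbb{N}$ and let $D$ be a digraph with $\delta^+(D)\ge\ell_1+\ell_2$. Then for every $v\in V(D)$ there are directed paths $P_1,P_2$ in $D$ of lengths $\ell_1$ and $\ell_2$ respectively, both starting at $v$, with $V(P_1)\cap V(P_2)=\{v\}$.
   Context: Digraphs are finite, loopless, without parallel arcs (digons allowed). $\delta^+(D)$ is the minimum out-degree; the length of a path is its number of arcs. *)

theory Defs
  imports Main
begin

text \<open>A digraph: finite vertex set V, arc set A of ordered pairs of vertices,
no loops. Parallel arcs are impossible since A is a set; digons (u,v),(v,u) allowed.\<close>
definition digraph :: "'a set \<Rightarrow> ('a \<times> 'a) set \<Rightarrow> bool" where
  "digraph V A \<longleftrightarrow> finite V \<and> A \<subseteq> V \<times> V \<and> (\<forall>v. (v, v) \<notin> A)"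

definition out_nbrs :: "('a \<times> 'a) set \<Rightarrow> 'a \<Rightarrow> 'a set" where
  "out_nbrs A v = {w. (v, w) \<in> A}"

definition out_degree :: "('a \<times> 'a) set \<Rightarrow> 'a \<Rightarrow> nat" where
  "out_degree A v = card (out_nbrs A v)"

definition min_outdeg_ge :: "'a set \<Rightarrow> ('a \<times> 'a) set \<Rightarrow> nat \<Rightarrow> bool" where
  "min_outdeg_ge V A k \<longleftrightarrow> (\<forall>v\<in>V. out_degree A v \<ge> k)"

definition dpath :: "'a set \<Rightarrow> ('a \<times> 'a) set \<Rightarrow> 'a list \<Rightarrow> bool" where
  "dpath V A p \<longleftrightarrow> p \<noteq> [] \<and> set p \<subseteq> V \<and> distinct p \<and>
     (\<forall>i. Suc i < length p \<longrightarrow> (p ! i, p ! Suc i) \<in> A)"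

definition path_len :: "'a list \<Rightarrow> nat" where
  "path_len p = length p - 1"

end

theory Submission
  imports Defs
begin

lemma grow:
  assumes dg: "digraph V A" and md: "min_outdeg_ge V A d" and v: "v \<in> V"
    and fS: "finite S" and vS: "v \<in> S"
  shows "card S + k \<le> d + 1 \<Longrightarrow> \<exists>P. dpath V A P \<and> path_len P = k \<and> hd P = v \<and> set P \<inter> S = {v}"
proof (induction k)
  case 0
  show ?case using v vS by (rule_tac x="[v]" in exI) (auto simp: dpath_def path_len_def)
next
  case (Suc k)
  then obtain P where P: "dpath V A P" "path_len P = k" "hd P = v" "set P \<inter> S = {v}" by auto
  have ne: "P \<noteq> []" and sV: "set P \<subseteq> V" and di: "distinct P"
    and ar: "\<And>i. Suc i < length P \<Longrightarrow> (P ! i, P ! Suc i) \<in> A"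
    using P(1) unfolding dpath_def by auto
  have lenP: "length P = k + 1" using P(2) ne unfolding path_len_def by (cases P) auto
  have cP: "card (set P) = k + 1" using di lenP distinct_card by metis
  define w where "w = last P"
  have wV: "w \<in> V" using sV ne w_def by auto
  have wP: "w \<in> set P" using ne w_def by auto
  define T where "T = S \<union> set P"
  have fT: "finite T" using fS T_def by auto
  have "card S + card (set P) = card T + card (S \<inter> set P)"
    unfolding T_def by (rule card_Un_Int[OF fS List.finite_set])
  moreover have "S \<inter> set P = {v}" using P(4) by auto
  ultimately have cT: "card T = card S + k" using cP by simp
  have wT: "w \<in> T" using wP T_def by auto
  have cTw: "card (T - {w}) = card S + k - 1" using cT wT fT by simp
  have cS0: "card S \<noteq> 0" using fS vS by auto
  hence cS: "card S \<ge> 1" by simp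
  have fin: "finite (out_nbrs A w)"
  proof -
    have "out_nbrs A w \<subseteq> V" using dg unfolding digraph_def out_nbrs_def by auto
    thus ?thesis using dg unfolding digraph_def using finite_subset by auto
  qed
  have deg: "card (out_nbrs A w) \<ge> d" using md wV unfolding min_outdeg_ge_def out_degree_def by auto
  have "\<not> out_nbrs A w \<subseteq> T - {w}"
  proof
    assume "out_nbrs A w \<subseteq> T - {w}"
    hence "card (out_nbrs A w) \<le> card (T - {w})" using fT by (simp add: card_mono)
    thus False using cTw deg Suc.prems cS by linarith
  qed
  then obtain u where u: "(w, u) \<in> A" "u \<notin> T - {w}" unfolding out_nbrs_def by auto
  have uw: "u \<noteq> w" using u(1) dg unfolding digraph_def by auto
  have uT: "u \<notin> T" using u uw by auto
  have uV: "u \<in> V" using u(1) dg unfolding digraph_def by auto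
  define Q where "Q = P @ [u]"
  have "dpath V A Q"
    unfolding dpath_def Q_def
  proof (intro conjI allI impI)
    show "P @ [u] \<noteq> []" by simp
    show "set (P @ [u]) \<subseteq> V" using sV uV by auto
    show "distinct (P @ [u])" using di uT T_def by auto
    fix i assume i: "Suc i < length (P @ [u])"
    show "((P @ [u]) ! i, (P @ [u]) ! Suc i) \<in> A"
    proof (cases "Suc i < length P")
      case True thus ?thesis using ar[OF True] by (simp add: nth_append)
    next
      case False
      hence "i = length P - 1" "Suc i = length P" using i by auto
      thus ?thesis using u(1) ne w_def by (simp add: nth_append last_conv_nth)
    qed
  qed
  moreover have "path_len Q = Suc k" using lenP unfolding Q_def path_len_def by simp
  moreover have "hd Q = v" using P(3) ne Q_def by simp
  moreover have "set Q \<inter> S = {v}" using P(4) uT T_def Q_def by auto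
  ultimately show ?case by (intro exI[of _ Q] conjI)
qed

theorem lemma3p1:
  fixes V :: "'a set" and A :: "('a \<times> 'a) set" and l1 l2 :: nat
  assumes "digraph V A"
    and "min_outdeg_ge V A (l1 + l2)"
    and "v \<in> V"
  shows "\<exists>P1 P2. dpath V A P1 \<and> dpath V A P2 \<and>
           path_len P1 = l1 \<and> path_len P2 = l2 \<and>
           hd P1 = v \<and> hd P2 = v \<and> set P1 \<inter> set P2 = {v}"
proof -
  have g1: "\<exists>P. dpath V A P \<and> path_len P = l1 \<and> hd P = v \<and> set P \<inter> {v} = {v}"
    by (rule grow[OF assms, where S="{v}" and k=l1]) auto
  then obtain P1 where P1: "dpath V A P1" "path_len P1 = l1" "hd P1 = v" "set P1 \<inter> {v} = {v}"
    by blast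
  have ne: "P1 \<noteq> []" "distinct P1" using P1(1) unfolding dpath_def by blast+
  have "length P1 = l1 + 1" using P1(2) ne(1) unfolding path_len_def by (cases P1) auto
  hence c: "card (set P1) = l1 + 1" using ne(2) by (simp add: distinct_card)
  have vP: "v \<in> set P1" using P1(3) ne by auto
  have g2: "\<exists>P. dpath V A P \<and> path_len P = l2 \<and> hd P = v \<and> set P \<inter> set P1 = {v}"
    by (rule grow[OF assms, where S="set P1" and k=l2]) (use c vP in auto)
  then obtain P2 where P2: "dpath V A P2" "path_len P2 = l2" "hd P2 = v" "set P2 \<inter> set P1 = {v}"
    by blast
  have "set P1 \<inter> set P2 = {v}" using P2(4) by (simp add: Int_commute)
  thus ?thesis using P1(1-3) P2(1-3) by blast
qed

end
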